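(* For any $q\in\mathbb N$, $0<\epsilon\le1$ and $\lambda>\mu_q^*>0$, there exist a multilinear polynomial $f$ with nonnegative coefficients of total power $q$ and independent $\{0,1\}$-valued random variables $X_1,\dots,X_m$ such that (i) $\mu_j(f,X)\le\epsilon^{q-j}\mu_q^*$ for all $0\le j\le q$; (ii) $\Pr[f(X)-\mathbb E[f(X)]\ge\lambda]\ge\exp\{-2\epsilon\}\left(\frac{\epsilon}{4q(\lambda/\mu_q^* )^{1/q}}\right)^{4q(\lambda/\mu_q^* )^{1/q}}$; (iii) $\Pr[f(X)-\mathbb E[f(X)]\ge\mu_q^*]\ge\exp\{-2\epsilon\}\left(\frac{\epsilon}{q+1}\right)^{q+1}$.
   Context: For a multilinear polynomial $f(x)=\sum_{h\in\mathcal H}w_h\prod_{v\in h}x_v$ with $w_h\ge0$ and independent $\{0,1\}$-valued random variables $X$, $\mu_r(f,X)=\max_{A\subseteq[m],|A|=r}\sum_{h\in\mathcal H,\,A\subseteq h}w_h\prod_{i\in h\setminus A}\mathbb E[X_i]$. *)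

theory Defs
  imports "HOL-Probability.Probability"
begin

text \<open>A multilinear polynomial on variables indexed by 0..m-1 is given by a finite
  family H of hyperedges (subsets of the variable set) and weights w.
  Evaluation at a point x.\<close>
definition mpoly_eval :: "nat set set \<Rightarrow> (nat set \<Rightarrow> real) \<Rightarrow> (nat \<Rightarrow> real) \<Rightarrow> real" where
  "mpoly_eval H w x = (\<Sum>h\<in>H. w h * (\<Prod>v\<in>h. x v))"

text \<open>If no r-subset of [m] exists, the maximum over the
  empty family is taken to be 0 (all candidate values are nonnegative, so adding 0 to
  the maximised set changes nothing otherwise).\<close>
definition mu :: "nat \<Rightarrow> nat \<Rightarrow> nat set set \<Rightarrow> (nat set \<Rightarrow> real) \<Rightarrow> (nat \<Rightarrow> real) \<Rightarrow> real" where
  "mu r m H w EXi = Max (insert 0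
     ((\<lambda>A. \<Sum>h\<in>{h\<in>H. A \<subseteq> h}. w h * (\<Prod>i\<in>h - A. EXi i)) ` {A. A \<subseteq> {..<m} \<and> card A = r}))"

end

theory Submission
  imports Defs "HOL-Probability.Probability"
begin

lemma prod_of_bool_real: "finite h \<Longrightarrow> (\<Prod>v\<in>h. (of_bool (\<omega> v)::real)) = of_bool (\<forall>v\<in>h. \<omega> v)"
  by (induction h rule: finite_induct) auto

lemma E_prod:
  fixes p :: real
  assumes "finite A" "h \<subseteq> A" "0 \<le> p" "p \<le> 1"
  shows "measure_pmf.expectation (Pi_pmf A False (\<lambda>_. bernoulli_pmf p)) (\<lambda>\<omega>. \<Prod>v\<in>h. (of_bool (\<omega> v)::real)) = p ^ card h"
proof -
  have fh: "finite h" using assms finite_subset by blast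
  have eq: "(\<lambda>\<omega>. \<Prod>v\<in>h. (of_bool (\<omega> v)::real)) = (\<lambda>\<omega>. \<Prod>x\<in>A. (\<lambda>x b. if x \<in> h then (of_bool b::real) else 1) x (\<omega> x))"
  proof
    fix \<omega> :: "'a \<Rightarrow> bool"
    have "(\<Prod>x\<in>A. (if x \<in> h then (of_bool (\<omega> x)::real) else 1)) = (\<Prod>x\<in>A \<inter> h. (of_bool (\<omega> x)::real))"
      using assms(1) by (simp add: prod.If_cases)
    also have "A \<inter> h = h" using assms by blast
    finally show "(\<Prod>v\<in>h. (of_bool (\<omega> v)::real)) = (\<Prod>x\<in>A. (\<lambda>x b. if x \<in> h then (of_bool b::real) else 1) x (\<omega> x))" by simp
  qed
  have "measure_pmf.expectation (Pi_pmf A False (\<lambda>_. bernoulli_pmf p)) (\<lambda>\<omega>. \<Prod>x\<in>A. (\<lambda>x b. if x \<in> h then (of_bool b::real) else 1) x (\<omega> x))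
     = (\<Prod>x\<in>A. measure_pmf.expectation (bernoulli_pmf p) (\<lambda>b. if x \<in> h then (of_bool b::real) else 1))"
    by (rule expectation_prod_Pi_pmf) (use assms in \<open>auto intro: integrable_measure_pmf_finite\<close>)
  also have "\<dots> = (\<Prod>x\<in>A. if x \<in> h then p else 1)"
    using assms by (intro prod.cong) auto
  also have "\<dots> = p ^ card h"
    using assms by (simp add: prod.If_cases Int_absorb1 Int_commute)
  finally show ?thesis using eq by simp
qed

lemma pow_plus_one: "0 \<le> (r::real) \<Longrightarrow> r ^ n + 1 \<le> (r + 1) ^ n \<or> n = 0"
proof (induction n)
  case (Suc n)
  show ?case
  proof (cases "n = 0")
    case True then show ?thesis by simp
  next
    case False
    with Suc have "r ^ n + 1 \<le> (r+1)^n" by auto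
    hence "(r^n + 1) * (r+1) \<le> (r+1)^n * (r+1)" using Suc.prems by (intro mult_right_mono) auto
    moreover have "r ^ Suc n + 1 \<le> (r^n + 1) * (r+1)" using Suc.prems by (simp add: algebra_simps)
    ultimately show ?thesis by (simp add: mult.commute)
  qed
qed simp

lemma one_minus_exp: "0 \<le> (x::real) \<Longrightarrow> x \<le> 1/2 \<Longrightarrow> exp (-2*x) \<le> 1 - x"
proof -
  assume a: "0 \<le> x" "x \<le> 1/2"
  have "x*x \<le> x*(1/2)" using a by (intro mult_left_mono) auto
  hence "-2*x \<le> - x - 2 * x\<^sup>2" by (simp add: power2_eq_square)
  also have "\<dots> \<le> ln (1 - x)" by (rule ln_one_minus_pos_lower_bound) (use a in auto)
  finally have "exp (-2*x) \<le> exp (ln (1-x))" by simp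
  thus ?thesis using a by simp
qed


lemma fX_eq:
  assumes "finite H" "\<And>h. h \<in> H \<Longrightarrow> finite h"
  shows "mpoly_eval H (\<lambda>_. c) (\<lambda>i. of_bool (\<omega> i)) = c * real (card {h\<in>H. h \<subseteq> {i. \<omega> i}})"
proof -
  have "mpoly_eval H (\<lambda>_. c) (\<lambda>i. of_bool (\<omega> i)) = (\<Sum>h\<in>H. c * of_bool (h \<subseteq> {i. \<omega> i}))"
    unfolding mpoly_eval_def using assms by (intro sum.cong) (auto simp: prod_of_bool_real subset_eq)
  also have "\<dots> = c * real (card {h\<in>H. h \<subseteq> {i. \<omega> i}})"
    using assms by (simp add: sum_distrib_left[symmetric] Collect_conj_eq Int_commute Collect_mem_eq)
  finally show ?thesis .
qed

lemma finite_set_Pi_pmf_bool: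
  "finite (set_pmf (Pi_pmf {..<K::nat} False (\<lambda>_. bernoulli_pmf p)))"
proof -
  have "set_pmf (Pi_pmf {..<K} False (\<lambda>_. bernoulli_pmf p)) \<subseteq> (\<lambda>S x. x \<in> S) ` Pow {..<K}"
  proof
    fix f assume "f \<in> set_pmf (Pi_pmf {..<K} False (\<lambda>_. bernoulli_pmf p))"
    hence f: "\<forall>x. x \<notin> {..<K} \<longrightarrow> f x = False" using set_Pi_pmf_subset[OF finite_lessThan[of "K::nat"], of False] by blast
    have "f = (\<lambda>x. x \<in> {x. f x})" by auto
    moreover have "{x. f x} \<in> Pow {..<K}" using f by auto
    ultimately show "f \<in> (\<lambda>S x. x \<in> S) ` Pow {..<K}" by blast
  qed
  thus ?thesis by (rule finite_subset) auto
qed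

lemma mu_bound:
  fixes p c :: real
  assumes "j \<le> q" "0 \<le> p" "0 \<le> c" "real K * p \<le> e" "q \<le> K"
      and EX: "\<And>i. i < K \<Longrightarrow> EXi i = p"
  shows "mu j K {h. h \<subseteq> {..<K} \<and> card h = q} (\<lambda>_. c) EXi \<le> e ^ (q - j) * c"
proof -
  let ?H = "{h. h \<subseteq> {..<K} \<and> card h = q}"
  let ?S = "{A. A \<subseteq> {..<K} \<and> card A = j}"
  have e0: "0 \<le> e" using assms by (meson mult_nonneg_nonneg of_nat_0_le_iff order_trans)
  have finH: "finite ?H" by (rule finite_subset[of _ "Pow {..<K}"]) auto
  have fS: "finite ?S" by (rule finite_subset[of _ "Pow {..<K}"]) auto
  have bnd: "(\<Sum>h\<in>{h\<in>?H. A \<subseteq> h}. c * (\<Prod>i\<in>h - A. EXi i)) \<le> e ^ (q - j) * c" if A: "A \<in> ?S" for A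
  proof -
    have fA: "finite A" using A finite_subset by blast
    have "(\<Sum>h\<in>{h\<in>?H. A \<subseteq> h}. c * (\<Prod>i\<in>h - A. EXi i)) = (\<Sum>h\<in>{h\<in>?H. A \<subseteq> h}. c * p ^ (q - j))"
    proof (intro sum.cong refl)
      fix h assume h: "h \<in> {h\<in>?H. A \<subseteq> h}"
      have "(\<Prod>i\<in>h - A. EXi i) = (\<Prod>i\<in>h - A. p)" using h EX by (intro prod.cong) auto
      also have "\<dots> = p ^ card (h - A)" by simp
      also have "card (h - A) = q - j" using h A fA by (simp add: card_Diff_subset)
      finally show "c * (\<Prod>i\<in>h - A. EXi i) = c * p ^ (q - j)" by simp
    qed
    also have "\<dots> = real (card {h\<in>?H. A \<subseteq> h}) * c * p ^ (q - j)" by simp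
    also have "\<dots> \<le> real (K ^ (q - j)) * c * p ^ (q - j)"
    proof -
      have "card {h\<in>?H. A \<subseteq> h} \<le> card {B. B \<subseteq> {..<K} \<and> card B = q - j}"
      proof (rule card_inj_on_le[where f = "\<lambda>h. h - A"])
        show "inj_on (\<lambda>h. h - A) {h\<in>?H. A \<subseteq> h}" by (auto simp: inj_on_def)
        show "(\<lambda>h. h - A) ` {h\<in>?H. A \<subseteq> h} \<subseteq> {B. B \<subseteq> {..<K} \<and> card B = q - j}"
          using A fA by (auto simp: card_Diff_subset)
        show "finite {B. B \<subseteq> {..<K} \<and> card B = q - j}" by (rule finite_subset[of _ "Pow {..<K}"]) auto
      qed
      also have "\<dots> = K choose (q - j)" using n_subsets[of "{..<K}" "q - j"] by simp
      also have "\<dots> \<le> K ^ (q - j)" using assms by (intro binomial_le_pow) auto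
      finally have "real (card {h\<in>?H. A \<subseteq> h}) \<le> real (K ^ (q - j))" by linarith
      thus ?thesis using assms by (intro mult_right_mono) auto
    qed
    also have "\<dots> = (real K * p) ^ (q - j) * c" by (simp add: power_mult_distrib)
    also have "\<dots> \<le> e ^ (q - j) * c" using assms by (intro mult_right_mono power_mono) auto
    finally show ?thesis .
  qed
  show ?thesis unfolding mu_def
    using fS bnd e0 assms(3) by (intro Max.boundedI) auto
qed


theorem lemma18:
  fixes q :: nat and \<epsilon> lam mustar :: real
  assumes "q \<ge> 1" and "0 < \<epsilon>" and "\<epsilon> \<le> 1" and "0 < mustar" and "mustar < lam"
  shows "\<exists>(m::nat) (H::nat set set) (w::nat set \<Rightarrow> real)
            (M::(nat \<Rightarrow> bool) measure) (X::nat \<Rightarrow> (nat \<Rightarrow> bool) \<Rightarrow> real).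
    finite H \<and> (\<forall>h\<in>H. h \<subseteq> {..<m}) \<and> (\<forall>h\<in>H. 0 \<le> w h) \<and>
    (\<forall>h\<in>H. card h \<le> q) \<and> (\<exists>h\<in>H. card h = q \<and> 0 < w h) \<and>
    prob_space M \<and> prob_space.indep_vars M (\<lambda>_. borel) X {..<m} \<and>
    (\<forall>i<m. \<forall>\<omega>\<in>space M. X i \<omega> \<in> {0, 1}) \<and>
    (let EXi = (\<lambda>i. integral\<^sup>L M (X i));
         fX = (\<lambda>\<omega>. mpoly_eval H w (\<lambda>i. X i \<omega>));
         EfX = integral\<^sup>L M fX;
         r = (lam / mustar) powr (1 / real q)
     in (\<forall>j\<le>q. mu j m H w EXi \<le> \<epsilon> ^ (q - j) * mustar) \<and>
        measure M {\<omega>\<in>space M. fX \<omega> - EfX \<ge> lam}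
          \<ge> exp (- 2 * \<epsilon>) * (\<epsilon> / (4 * real q * r)) powr (4 * real q * r) \<and>
        measure M {\<omega>\<in>space M. fX \<omega> - EfX \<ge> mustar}
          \<ge> exp (- 2 * \<epsilon>) * (\<epsilon> / real (q + 1)) ^ (q + 1))"
proof -
  define r where "r = (lam / mustar) powr (1 / real q)"
  have q0: "real q > 0" using assms by auto
  have lm: "lam / mustar > 1" using assms by simp
  have r1: "r > 1" unfolding r_def using lm q0 by simp
  have rq: "r ^ q = lam / mustar"
  proof -
    have "r ^ q = r powr real q" using r1 by (simp add: powr_realpow)
    also have "\<dots> = lam / mustar" unfolding r_def using q0 lm assms by (simp add: powr_powr)
    finally show ?thesis .
  qed
  define s where "s = nat \<lceil>r\<rceil> + 1"
  define K where "K = q * s"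
  have s_ge: "real s \<ge> r + 1" unfolding s_def using r1 by linarith
  have s_le: "real s \<le> r + 2" unfolding s_def using r1 by linarith
  have s2: "s \<ge> 2" unfolding s_def using r1 by linarith
  have K2q: "K \<ge> 2 * q" unfolding K_def using s2 by simp
  have K_le: "real K \<le> 4 * real q * r"
  proof -
    have "real K = real q * real s" unfolding K_def by simp
    also have "\<dots> \<le> real q * (4 * r)" using s_le r1 by (intro mult_left_mono) auto
    finally show ?thesis by simp
  qed
  have Kpos: "real K > 0" using K2q assms by simp
  define p where "p = \<epsilon> / real K"
  have p0: "0 < p" unfolding p_def using Kpos assms by simp
  have p_half: "p \<le> 1/2" unfolding p_def using K2q assms by (simp add: field_simps)
  have Kp: "real K * p = \<epsilon>" unfolding p_def using Kpos by simp
  define H where "H = {h. h \<subseteq> {..<K} \<and> card h = q}"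
  define w where "w = (\<lambda>_::nat set. mustar)"
  define P where "P = Pi_pmf {..<K} False (\<lambda>_. bernoulli_pmf p)"
  define M where "M = measure_pmf P"
  define X where "X = (\<lambda>(i::nat) (\<omega>::nat\<Rightarrow>bool). (of_bool (\<omega> i)::real))"
  have finH: "finite H" unfolding H_def by (rule finite_subset[of _ "Pow {..<K}"]) auto
  have finh: "\<And>h. h \<in> H \<Longrightarrow> finite h" unfolding H_def using finite_subset by blast
  have cardH: "card H = K choose q" unfolding H_def using n_subsets[of "{..<K}" q] by simp
  have binq: "real (K choose q) \<ge> r ^ q + 1"
  proof -
    have "r ^ q + 1 \<le> (r + 1) ^ q" using pow_plus_one[of r q] r1 assms by auto
    also have "\<dots> \<le> real s ^ q" using s_ge r1 by (intro power_mono) auto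
    also have "real s = real K / real q" unfolding K_def using q0 by simp
    also have "(real K / real q) ^ q \<le> real (K choose q)" using K2q by (intro binomial_ge_n_over_k_pow_k) auto
    finally show ?thesis .
  qed
  have EX: "integral\<^sup>L M (X i) = p" if "i < K" for i
  proof -
    have "integral\<^sup>L M (X i) = measure_pmf.expectation P (\<lambda>\<omega>. \<Prod>v\<in>{i}. (of_bool (\<omega> v)::real))"
      unfolding M_def X_def by simp
    also have "\<dots> = p" unfolding P_def using that p0 p_half by (subst E_prod) auto
    finally show ?thesis .
  qed
  define fX where "fX = (\<lambda>\<omega>. mpoly_eval H w (\<lambda>i. X i \<omega>))"
  have fX_card: "fX \<omega> = mustar * real (card {h\<in>H. h \<subseteq> {i. \<omega> i}})" for \<omega>
    unfolding fX_def w_def X_def using fX_eq[OF finH finh] by simp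
  have EfX: "integral\<^sup>L M fX = real (K choose q) * mustar * p ^ q"
  proof -
    have "integral\<^sup>L M fX = integral\<^sup>L M (\<lambda>\<omega>. \<Sum>h\<in>H. mustar * (\<Prod>v\<in>h. (of_bool (\<omega> v)::real)))"
      unfolding fX_def mpoly_eval_def w_def X_def by simp
    also have "\<dots> = (\<Sum>h\<in>H. integral\<^sup>L M (\<lambda>\<omega>. mustar * (\<Prod>v\<in>h. (of_bool (\<omega> v)::real))))"
      unfolding M_def P_def by (rule Bochner_Integration.integral_sum[where f="\<lambda>h \<omega>. mustar * (\<Prod>v\<in>h. (of_bool (\<omega> v)::real))"]) (auto intro: integrable_measure_pmf_finite finite_set_Pi_pmf_bool)
    also have "\<dots> = (\<Sum>h\<in>H. mustar * p ^ q)"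
    proof (intro sum.cong refl)
      fix h assume h: "h \<in> H"
      have "integral\<^sup>L M (\<lambda>\<omega>. mustar * (\<Prod>v\<in>h. (of_bool (\<omega> v)::real))) = mustar * integral\<^sup>L M (\<lambda>\<omega>. (\<Prod>v\<in>h. (of_bool (\<omega> v)::real)))"
        by simp
      also have "integral\<^sup>L M (\<lambda>\<omega>. (\<Prod>v\<in>h. (of_bool (\<omega> v)::real))) = p ^ card h"
        unfolding M_def P_def using h p0 p_half by (intro E_prod) (auto simp: H_def)
      finally show "integral\<^sup>L M (\<lambda>\<omega>. mustar * (\<Prod>v\<in>h. (of_bool (\<omega> v)::real))) = mustar * p ^ q"
        using h by (simp add: H_def)
    qed
    also have "\<dots> = real (K choose q) * mustar * p ^ q" using cardH by simp
    finally show ?thesis .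
  qed
  have EfX_le: "integral\<^sup>L M fX \<le> \<epsilon> ^ q * mustar"
  proof -
    have "real (K choose q) \<le> real (K ^ q)" using K2q by (subst of_nat_le_iff, intro binomial_le_pow) auto
    hence "real (K choose q) * p ^ q \<le> real K ^ q * p ^ q" using p0 by (intro mult_right_mono) auto
    also have "\<dots> = \<epsilon> ^ q" using Kp by (simp add: power_mult_distrib[symmetric])
    finally have "(real (K choose q) * p ^ q) * mustar \<le> \<epsilon> ^ q * mustar"
      using assms by (intro mult_right_mono) auto
    thus ?thesis using EfX by (simp add: algebra_simps)
  qed
  have EfX_le1: "integral\<^sup>L M fX \<le> mustar"
  proof -
    have "\<epsilon> ^ q \<le> 1" using assms by (simp add: power_le_one)
    hence "\<epsilon> ^ q * mustar \<le> 1 * mustar" using assms by (intro mult_right_mono) auto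
    thus ?thesis using EfX_le by simp
  qed
  have space: "space M = UNIV" unfolding M_def by simp
  have ps: "prob_space M" unfolding M_def by (rule measure_pmf.prob_space_axioms)
  have indep: "prob_space.indep_vars M (\<lambda>_. borel) X {..<K}"
  proof -
    have "prob_space.indep_vars M (\<lambda>_. count_space UNIV) (\<lambda>x f. f x) {..<K}"
      unfolding M_def P_def by (rule indep_vars_Pi_pmf) simp
    from prob_space.indep_vars_compose2[OF ps this, of "\<lambda>_ b. (of_bool b :: real)" "\<lambda>_. borel"]
    show ?thesis unfolding X_def by simp
  qed
  have mub: "\<forall>j\<le>q. mu j K H w (\<lambda>i. integral\<^sup>L M (X i)) \<le> \<epsilon> ^ (q - j) * mustar"
  proof (intro allI impI)
    fix j assume "j \<le> q"
    show "mu j K H w (\<lambda>i. integral\<^sup>L M (X i)) \<le> \<epsilon> ^ (q - j) * mustar"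
      unfolding H_def w_def
      by (rule mu_bound) (use \<open>j \<le> q\<close> p0 assms Kp K2q EX in auto)
  qed
  define T where "T = 4 * real q * r"
  have T1: "T \<ge> 1"
  proof -
    have "1 \<le> 4 * real q" using assms by simp
    hence "1 * 1 \<le> (4 * real q) * r" using r1 by (intro mult_mono) auto
    thus ?thesis unfolding T_def by simp
  qed
  have ii: "measure M {\<omega>\<in>space M. fX \<omega> - integral\<^sup>L M fX \<ge> lam} \<ge> exp (- 2 * \<epsilon>) * (\<epsilon> / T) powr T"
  proof -
    let ?E = "Pi {..<K} (\<lambda>_. {True})"
    have sub: "?E \<subseteq> {\<omega>\<in>space M. fX \<omega> - integral\<^sup>L M fX \<ge> lam}"
    proof
      fix \<omega> assume "\<omega> \<in> ?E"
      hence "{h\<in>H. h \<subseteq> {i. \<omega> i}} = H" unfolding H_def by auto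
      hence "fX \<omega> = mustar * real (K choose q)" using fX_card cardH by simp
      moreover have "mustar * real (K choose q) \<ge> mustar * (r^q + 1)" using binq assms by (intro mult_left_mono) auto
      moreover have "mustar * (r^q) = lam" using rq assms by simp
      ultimately show "\<omega> \<in> {\<omega>\<in>space M. fX \<omega> - integral\<^sup>L M fX \<ge> lam}"
        using EfX_le1 space by (auto simp: algebra_simps)
    qed
    have mE: "measure M ?E = p ^ K"
      unfolding M_def P_def by (subst measure_Pi_pmf_Pi) (use p0 p_half in \<open>auto simp: measure_pmf_single\<close>)
    have "measure M ?E \<le> measure M {\<omega>\<in>space M. fX \<omega> - integral\<^sup>L M fX \<ge> lam}"
      using sub unfolding M_def by (intro measure_pmf.finite_measure_mono) auto
    moreover have "exp (- 2 * \<epsilon>) * (\<epsilon> / T) powr T \<le> p ^ K"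
    proof -
      have eT: "0 < \<epsilon> / T" "\<epsilon> / T \<le> 1" using assms T1 by auto
      have "exp (- 2 * \<epsilon>) * (\<epsilon> / T) powr T \<le> 1 * (\<epsilon> / T) powr T"
        using assms by (intro mult_right_mono) auto
      also have "\<dots> \<le> (\<epsilon> / T) powr real K" using eT K_le unfolding T_def by (simp add: powr_mono')
      also have "\<dots> = (\<epsilon> / T) ^ K" using eT by (simp add: powr_realpow)
      also have "\<dots> \<le> p ^ K"
      proof (rule power_mono)
        show "\<epsilon> / T \<le> p"
        proof -
          have "0 < T * real K" using T1 Kpos by simp
          thus ?thesis unfolding p_def using K_le[folded T_def] assms by (intro divide_left_mono) auto
        qed
      qed (use eT in auto)
      finally show ?thesis .
    qed
    ultimately show ?thesis using mE by linarith
  qed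
  have iii: "measure M {\<omega>\<in>space M. fX \<omega> - integral\<^sup>L M fX \<ge> mustar} \<ge> exp (- 2 * \<epsilon>) * (\<epsilon> / real (q + 1)) ^ (q + 1)"
  proof -
    define Ts where "Ts = {T. T \<subseteq> {..<K} \<and> card T = q + 1}"
    define E where "E = (\<lambda>T. Pi {..<K} (\<lambda>i. if i \<in> T then {True} else {False}))"
    have finTs: "finite Ts" unfolding Ts_def by (rule finite_subset[of _ "Pow {..<K}"]) auto
    have cardTs: "card Ts = K choose (q + 1)" unfolding Ts_def using n_subsets[of "{..<K}" "q+1"] by simp
    have disj: "disjoint_family_on E Ts"
      unfolding disjoint_family_on_def
    proof (intro ballI impI)
      fix T1 T2 assume T1: "T1 \<in> Ts" and T2: "T2 \<in> Ts" and ne: "T1 \<noteq> T2"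
      obtain i where i: "(i \<in> T1) \<noteq> (i \<in> T2)" using ne by blast
      hence "i < K" using T1 T2 unfolding Ts_def by auto
      show "E T1 \<inter> E T2 = {}"
      proof (rule ccontr)
        assume "E T1 \<inter> E T2 \<noteq> {}"
        then obtain \<omega> where "\<omega> \<in> E T1" "\<omega> \<in> E T2" by blast
        hence a: "\<omega> \<in> Pi {..<K} (\<lambda>i. if i \<in> T1 then {True} else {False})"
            and b: "\<omega> \<in> Pi {..<K} (\<lambda>i. if i \<in> T2 then {True} else {False})" unfolding E_def by auto
        have "\<omega> i = (i \<in> T1)" using Pi_mem[OF a, of i] \<open>i < K\<close> by (cases "i \<in> T1") auto
        moreover have "\<omega> i = (i \<in> T2)" using Pi_mem[OF b, of i] \<open>i < K\<close> by (cases "i \<in> T2") auto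
        ultimately show False using i by simp
      qed
    qed
    have mE: "measure M (E T) = p ^ (q + 1) * (1 - p) ^ (K - (q + 1))" if "T \<in> Ts" for T
    proof -
      have TK: "T \<subseteq> {..<K}" "card T = q + 1" using that unfolding Ts_def by auto
      have "measure M (E T) = (\<Prod>x\<in>{..<K}. measure_pmf.prob (bernoulli_pmf p) (if x \<in> T then {True} else {False}))"
        unfolding M_def P_def E_def by (rule measure_Pi_pmf_Pi) simp
      also have "\<dots> = (\<Prod>x\<in>{..<K}. if x \<in> T then p else 1 - p)"
        using p0 p_half by (intro prod.cong) (auto simp: measure_pmf_single)
      also have "\<dots> = p ^ card ({..<K} \<inter> {x. x \<in> T}) * (1 - p) ^ card ({..<K} \<inter> - {x. x \<in> T})"
        by (simp add: prod.If_cases)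
      also have "{..<K} \<inter> {x. x \<in> T} = T" using TK by auto
      also have "{..<K} \<inter> - {x. x \<in> T} = {..<K} - T" by auto
      also have "card ({..<K} - T) = K - (q + 1)" using TK by (simp add: card_Diff_subset finite_subset)
      finally show ?thesis using TK by simp
    qed
    have sub: "(\<Union>T\<in>Ts. E T) \<subseteq> {\<omega>\<in>space M. fX \<omega> - integral\<^sup>L M fX \<ge> mustar}"
    proof
      fix \<omega> assume "\<omega> \<in> (\<Union>T\<in>Ts. E T)"
      then obtain T where T: "T \<in> Ts" "\<omega> \<in> E T" by blast
      have TK: "T \<subseteq> {..<K}" "card T = q + 1" using T unfolding Ts_def by auto
      have a: "\<omega> \<in> Pi {..<K} (\<lambda>i. if i \<in> T then {True} else {False})" using T unfolding E_def by auto
      have om: "\<omega> i = (i \<in> T)" if "i < K" for i using Pi_mem[OF a, of i] that by (cases "i \<in> T") auto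
      have "{h\<in>H. h \<subseteq> {i. \<omega> i}} = {h. h \<subseteq> T \<and> card h = q}"
        unfolding H_def
      proof (intro set_eqI iffI)
        fix h assume "h \<in> {h \<in> {h. h \<subseteq> {..<K} \<and> card h = q}. h \<subseteq> {i. \<omega> i}}"
        hence h: "h \<subseteq> {..<K}" "card h = q" "h \<subseteq> {i. \<omega> i}" by auto
        have "h \<subseteq> T"
        proof
          fix v assume "v \<in> h"
          hence "v < K" "\<omega> v" using h by auto
          thus "v \<in> T" using om by blast
        qed
        thus "h \<in> {h. h \<subseteq> T \<and> card h = q}" using h by simp
      next
        fix h assume "h \<in> {h. h \<subseteq> T \<and> card h = q}"
        hence h: "h \<subseteq> T" "card h = q" by auto
        have "h \<subseteq> {i. \<omega> i}"
        proof
          fix v assume "v \<in> h"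
          hence "v < K" "v \<in> T" using h TK by auto
          thus "v \<in> {i. \<omega> i}" using om by blast
        qed
        thus "h \<in> {h \<in> {h. h \<subseteq> {..<K} \<and> card h = q}. h \<subseteq> {i. \<omega> i}}" using h TK by auto
      qed
      hence "card {h\<in>H. h \<subseteq> {i. \<omega> i}} = q + 1"
        using n_subsets[of T q] TK finite_subset by auto
      hence "fX \<omega> = mustar * (real q + 1)" using fX_card by simp
      moreover have "mustar * (real q + 1) \<ge> mustar + mustar" using assms by simp
      ultimately show "\<omega> \<in> {\<omega>\<in>space M. fX \<omega> - integral\<^sup>L M fX \<ge> mustar}"
        using EfX_le1 space by auto
    qed
    have "measure M (\<Union>T\<in>Ts. E T) = (\<Sum>T\<in>Ts. measure M (E T))"
      unfolding M_def by (rule measure_pmf.finite_measure_finite_Union) (use finTs disj in auto)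
    also have "\<dots> = real (K choose (q + 1)) * (p ^ (q + 1) * (1 - p) ^ (K - (q + 1)))"
      using mE cardTs by simp
    finally have mU: "measure M (\<Union>T\<in>Ts. E T) = real (K choose (q + 1)) * (p ^ (q + 1) * (1 - p) ^ (K - (q + 1)))" .
    have "measure M (\<Union>T\<in>Ts. E T) \<le> measure M {\<omega>\<in>space M. fX \<omega> - integral\<^sup>L M fX \<ge> mustar}"
      using sub unfolding M_def by (intro measure_pmf.finite_measure_mono) auto
    moreover have "exp (- 2 * \<epsilon>) * (\<epsilon> / real (q + 1)) ^ (q + 1) \<le> real (K choose (q + 1)) * (p ^ (q + 1) * (1 - p) ^ (K - (q + 1)))"
    proof -
      have e1: "exp (- 2 * \<epsilon>) \<le> (1 - p) ^ K"
      proof -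
        have k2: "- 2 * \<epsilon> = real K * (-2 * p)" using Kp by (simp add: algebra_simps)
        have "exp (- 2 * \<epsilon>) = exp (-2 * p) ^ K" unfolding k2 by (rule exp_of_nat_mult)
        also have "\<dots> \<le> (1 - p) ^ K" using one_minus_exp[of p] p0 p_half by (intro power_mono) auto
        finally show ?thesis .
      qed
      also have "\<dots> \<le> (1 - p) ^ (K - (q + 1))" using p0 p_half by (intro power_decreasing) auto
      finally have e2: "exp (- 2 * \<epsilon>) \<le> (1 - p) ^ (K - (q + 1))" .
      have "(\<epsilon> / real (q + 1)) ^ (q + 1) = (real K / real (q + 1)) ^ (q + 1) * p ^ (q + 1)"
        proof -
        have "real K / real (q + 1) * p = (real K * p) / real (q + 1)" by simp
        hence "real K / real (q + 1) * p = \<epsilon> / real (q + 1)" using Kp by simp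
        thus ?thesis by (metis power_mult_distrib)
      qed
      also have "\<dots> \<le> real (K choose (q + 1)) * p ^ (q + 1)"
        using K2q assms p0 by (intro mult_right_mono binomial_ge_n_over_k_pow_k) auto
      finally have e3: "(\<epsilon> / real (q + 1)) ^ (q + 1) \<le> real (K choose (q + 1)) * p ^ (q + 1)" .
      have "exp (- 2 * \<epsilon>) * (\<epsilon> / real (q + 1)) ^ (q + 1) \<le> (1 - p) ^ (K - (q + 1)) * (real (K choose (q + 1)) * p ^ (q + 1))"
        using e2 e3 assms p_half by (intro mult_mono) auto
      thus ?thesis by (simp add: algebra_simps)
    qed
    ultimately show ?thesis using mU by linarith
  qed
  have ex_h: "\<exists>h\<in>H. card h = q \<and> 0 < w h"
    using K2q assms unfolding H_def w_def by (intro bexI[of _ "{..<q}"]) auto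
  have X01: "\<forall>i<K. \<forall>\<omega>\<in>space M. X i \<omega> \<in> {0,1}" unfolding X_def by simp
  have Hsub: "\<forall>h\<in>H. h \<subseteq> {..<K}" unfolding H_def by auto
  have wnn: "\<forall>h\<in>H. 0 \<le> w h" unfolding w_def using assms by auto
  have Hc: "\<forall>h\<in>H. card h \<le> q" unfolding H_def by auto
  note ii' = ii[unfolded fX_def T_def r_def]
  note iii' = iii[unfolded fX_def]
  show ?thesis
    apply (rule exI[of _ K], rule exI[of _ H], rule exI[of _ w], rule exI[of _ M], rule exI[of _ X])
    unfolding Let_def
    by (intro conjI finH Hsub wnn Hc ex_h ps indep X01 mub ii' iii')
qed

end
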